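(* Consider the FlexPD-F iterates described in the context with $\alpha,\beta>0$, integer $T\ge1$, and $U=I-\alpha B$. If $\alpha<1/\rho(B)$, then for any $d,e,g>1$ and every $k\ge0$, \[\|\lambda^{k+1}-\lambda^*\|^2\le \frac{d}{\alpha^2 s(AA')}\Big(\frac{e}{e-1}\rho(U^2)+e\alpha^2L^2\Big)\|x^{k+1,T-1}-x^{k+1,T}\|^2+\frac{d}{(d-1)\alpha^2 s(AA')}\Big(\frac{g}{g-1}\alpha^2\rho\big((\beta A'A-B)^2\big)+g\alpha^2L^2\Big)\|x^{k+1,T}-x^*\|^2.\]
   Context: Setting: $n$ agents are connected by a connected undirected graph with edge set $\mathcal E$, $\epsilon=|\mathcal E|$. For $x\in\mathbb R^n$ let $f(x)=\sum_{i=1}^n f_i(x_i)$, where each $f_i:\mathbb R\to\mathbb R$ is twice differentiable with $m\le f_i''\le L$ for constants $0<m\le L$; $\nabla f(x)=(f_1'(x_1),\dots,f_n'(x_n))'$. $A\in\mathbb R^{\epsilon\times n}$ is the edge–node incidence matrix (null space spanned by the all-ones vector). $B\in\mathbb R^{n\times n}$ is symmetric positive semidefinite with the same null space as $A$, off-diagonal entries nonzero only on edges. $x^*$ is the unique minimizer of $f$ subject to $Ax=0$ and $\lambda^*$ a Lagrange multiplier with $\nabla f(x^* )+A'\lambda^*=0$, $Ax^*=0$, $Bx^*=0$, chosen in the column space of $A$ (orthogonal to the null space of $A'$). FlexPD-F: given $\alpha,\beta>0$, $T\ge1$, $x^0$ arbitrary, $\lambda^0=0$; for $k\ge0$: $x^{k+1,0}=x^k$,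 $x^{k+1,t}=(I-\alpha B)x^{k+1,t-1}-\alpha\nabla f(x^{k+1,t-1})-\alpha A'\lambda^k$ for $t=1,\dots,T$, $x^{k+1}=x^{k+1,T}$, $\lambda^{k+1}=\lambda^k+\beta Ax^{k+1}$. Notation: $\rho(S)$ largest eigenvalue of a symmetric matrix $S$; $s(AA')$ smallest nonzero eigenvalue of $AA'$; $\|\cdot\|$ Euclidean norm. *)

theory Defs
  imports "HOL-Analysis.Analysis"
begin

text \<open>Largest eigenvalue of a (symmetric) square matrix.\<close>
definition max_eig :: "real^'n^'n \<Rightarrow> real" where
  "max_eig S = Max {\<mu>. \<exists>v. v \<noteq> 0 \<and> S *v v = \<mu> *\<^sub>R v}"

text \<open>Smallest nonzero eigenvalue of a (symmetric) square matrix.\<close>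
definition min_nz_eig :: "real^'n^'n \<Rightarrow> real" where
  "min_nz_eig S = Min {\<mu>. \<mu> \<noteq> 0 \<and> (\<exists>v. v \<noteq> 0 \<and> S *v v = \<mu> *\<^sub>R v)}"

text \<open>Edge-node incidence matrix of a simple connected undirected graph:
  each row (edge) has one entry 1, one entry -1 (at the two distinct endpoints)
  and zeros elsewhere; distinct rows are distinct edges; the null space is
  spanned by the all-ones vector (connectedness).\<close>
definition incidence_matrix :: "real^'n^'e \<Rightarrow> bool" where
  "incidence_matrix A \<longleftrightarrow>
     (\<forall>e. \<exists>i j. i \<noteq> j \<and> A$e$i = 1 \<and> A$e$j = -1 \<and> (\<forall>k. k \<noteq> i \<and> k \<noteq> j \<longrightarrow> A$e$k = 0)) \<and>
     (\<forall>e1 e2. e1 \<noteq> e2 \<longrightarrow> A$e1 \<noteq> A$e2 \<and> A$e1 \<noteq> - A$e2) \<and>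
     {x. A *v x = 0} = span {(\<chi> i. 1)}"

text \<open>Gradient of the separable function sum_i f_i(x_i), given the derivatives f_i'.\<close>
definition sep_grad :: "('n \<Rightarrow> real \<Rightarrow> real) \<Rightarrow> real^'n \<Rightarrow> real^'n" where
  "sep_grad f' x = (\<chi> i. f' i (x$i))"

text \<open>Inner loop: x^{k+1,t} computed from x^{k+1,0} = x and lambda^k = lam.\<close>
fun flexpd_inner :: "real \<Rightarrow> real^'n^'n \<Rightarrow> real^'n^'e \<Rightarrow> ('n \<Rightarrow> real \<Rightarrow> real)
      \<Rightarrow> real^'e \<Rightarrow> real^'n \<Rightarrow> nat \<Rightarrow> real^'n" where
  "flexpd_inner \<alpha> B A f' lam x 0 = x"
| "flexpd_inner \<alpha> B A f' lam x (Suc t) =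
     (let y = flexpd_inner \<alpha> B A f' lam x t in
      (mat 1 - \<alpha> *\<^sub>R B) *v y - \<alpha> *\<^sub>R sep_grad f' y - \<alpha> *\<^sub>R (transpose A *v lam))"

text \<open>Outer loop: (x^k, lambda^k), with lambda^0 = 0.\<close>
fun flexpd :: "real \<Rightarrow> real \<Rightarrow> nat \<Rightarrow> real^'n^'n \<Rightarrow> real^'n^'e \<Rightarrow> ('n \<Rightarrow> real \<Rightarrow> real)
      \<Rightarrow> real^'n \<Rightarrow> nat \<Rightarrow> (real^'n) \<times> (real^'e)" where
  "flexpd \<alpha> \<beta> T B A f' x0 0 = (x0, 0)"
| "flexpd \<alpha> \<beta> T B A f' x0 (Suc k) =
     (let (x, lam) = flexpd \<alpha> \<beta> T B A f' x0 k;
          x' = flexpd_inner \<alpha> B A f' lam x T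
      in (x', lam + \<beta> *\<^sub>R (A *v x')))"

end

theory Submission
  imports Defs
begin

lemma transpose_dot: "(transpose M *v x) \<bullet> y = x \<bullet> ((M::real^'n^'m) *v y)"
  by (simp add: dot_lmul_matrix)

lemma sym_dot: "transpose S = S \<Longrightarrow> x \<bullet> ((S::real^'n^'n) *v y) = (S *v x) \<bullet> y"
  by (metis transpose_dot)

lemma eig_finite:
  fixes S :: "real^'n^'n"
  assumes S: "transpose S = S"
  shows "finite {\<mu>. \<exists>v. v \<noteq> 0 \<and> S *v v = \<mu> *\<^sub>R v}"
proof -
  define E where "E = {\<mu>. \<exists>v. v \<noteq> 0 \<and> S *v v = \<mu> *\<^sub>R v}"
  define vf where "vf = (\<lambda>\<mu>. SOME v. v \<noteq> 0 \<and> S *v v = \<mu> *\<^sub>R v)"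
  have vf: "vf \<mu> \<noteq> 0 \<and> S *v vf \<mu> = \<mu> *\<^sub>R vf \<mu>" if "\<mu> \<in> E" for \<mu>
    using that unfolding E_def vf_def by (metis (mono_tags, lifting) mem_Collect_eq someI_ex)
  have orth: "vf \<mu> \<bullet> vf \<nu> = 0" if "\<mu> \<in> E" "\<nu> \<in> E" "\<mu> \<noteq> \<nu>" for \<mu> \<nu>
  proof -
    have "\<nu> * (vf \<mu> \<bullet> vf \<nu>) = vf \<mu> \<bullet> (S *v vf \<nu>)" using vf[OF that(2)] by simp
    also have "\<dots> = (S *v vf \<mu>) \<bullet> vf \<nu>" using sym_dot[OF S] by blast
    also have "\<dots> = \<mu> * (vf \<mu> \<bullet> vf \<nu>)" using vf[OF that(1)] by simp
    finally show ?thesis using that(3) by simp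
  qed
  have inj: "inj_on vf E"
  proof (rule inj_onI)
    fix a b assume "a \<in> E" "b \<in> E" "vf a = vf b"
    then show "a = b" using orth[of a b] vf[of a] by (metis inner_eq_zero_iff)
  qed
  have "pairwise orthogonal (vf ` E)"
    unfolding pairwise_def orthogonal_def using orth by (metis imageE)
  moreover have "0 \<notin> vf ` E" using vf by auto
  ultimately have "independent (vf ` E)" by (rule pairwise_orthogonal_independent)
  then have "finite (vf ` E)" by (rule finiteI_independent)
  then show ?thesis using inj finite_imageD unfolding E_def by blast
qed

lemma quad_nonpos:
  fixes a b :: real
  assumes "\<forall>t. a * t + b * t^2 \<le> 0"
  shows "a = 0"
proof (rule ccontr)
  assume a: "a \<noteq> 0"
  define t where "t = a / (\<bar>b\<bar> + 1)"
  have pos: "\<bar>b\<bar> + 1 > 0" by simp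
  have gen: "a * (a / c) + b * (a / c)^2 = a^2 * (c + b) / c^2" if "c > 0" for c
    using that by (simp add: field_simps power2_eq_square)
  have "a * t + b * t^2 = a^2 * (\<bar>b\<bar> + 1 + b) / (\<bar>b\<bar> + 1)^2"
    unfolding t_def using gen[OF pos] by simp
  moreover have "a^2 * (\<bar>b\<bar> + 1 + b) / (\<bar>b\<bar> + 1)^2 > 0"
    using a by (intro divide_pos_pos mult_pos_pos) auto
  ultimately show False using assms by (metis not_le)
qed

lemma rayleigh_max:
  fixes S :: "real^'n^'n"
  assumes S: "transpose S = S" and V: "subspace V" and inv: "\<forall>v\<in>V. S *v v \<in> V"
    and ne: "\<exists>v\<in>V. v \<noteq> 0"
  shows "\<exists>M v0. v0 \<in> V \<and> v0 \<noteq> 0 \<and> S *v v0 = M *\<^sub>R v0 \<and> (\<forall>v\<in>V. v \<bullet> (S *v v) \<le> M * (norm v)^2)"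
proof -
  define q where "q = (\<lambda>v. v \<bullet> (S *v v))"
  define K where "K = sphere 0 1 \<inter> V"
  have "compact K" unfolding K_def
    by (intro compact_Int_closed compact_sphere closed_subspace V)
  moreover obtain w where w: "w \<in> V" "w \<noteq> 0" using ne by blast
  then have "(1 / norm w) *\<^sub>R w \<in> K" unfolding K_def using V by (simp add: subspace_scale)
  then have "K \<noteq> {}" by blast
  moreover have "continuous_on K q" unfolding q_def
    by (intro continuous_intros linear_continuous_on matrix_vector_mul_bounded_linear)
  ultimately obtain v0 where v0: "v0 \<in> K" "\<forall>y\<in>K. q y \<le> q v0"
    using continuous_attains_sup by blast
  define M where "M = q v0"
  have v0V: "v0 \<in> V" and nv0: "norm v0 = 1" using v0 unfolding K_def by auto
  have bound: "q v \<le> M * (norm v)^2" if "v \<in> V" for v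
  proof (cases "v = 0")
    case True then show ?thesis by (simp add: q_def)
  next
    case False
    define u where "u = (1 / norm v) *\<^sub>R v"
    have "u \<in> K" unfolding K_def u_def using V that False by (simp add: subspace_scale)
    then have "q u \<le> M" using v0 M_def by auto
    moreover have "q u = q v / (norm v)^2"
      unfolding q_def u_def by (simp add: matrix_vector_mult_scaleR power2_eq_square)
    ultimately show ?thesis using False by (simp add: divide_le_eq)
  qed
  define w where "w = S *v v0 - M *\<^sub>R v0"
  have wV: "w \<in> V" unfolding w_def using V inv v0V by (simp add: subspace_diff subspace_scale)
  have "\<forall>t. (2 * (w \<bullet> w)) * t + (q w - M * (norm w)^2) * t^2 \<le> 0"
  proof
    fix t :: real
    have "v0 + t *\<^sub>R w \<in> V" using V v0V wV by (simp add: subspace_add subspace_scale)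
    then have le: "q (v0 + t *\<^sub>R w) - M * (norm (v0 + t *\<^sub>R w))^2 \<le> 0" using bound by force
    have sw: "v0 \<bullet> (S *v w) = (S *v v0) \<bullet> w" using sym_dot[OF S] by blast
    have "q (v0 + t *\<^sub>R w) = q v0 + 2 * t * ((S *v v0) \<bullet> w) + t^2 * q w"
      unfolding q_def using sw
      by (simp add: matrix_vector_mult_add_rdistrib algebra_simps inner_add_left inner_add_right
          matrix_vector_mult_scaleR power2_eq_square inner_commute)
    moreover have "(norm (v0 + t *\<^sub>R w))^2 = 1 + 2 * t * (v0 \<bullet> w) + t^2 * (norm w)^2"
    proof -
      have "v0 \<bullet> v0 = 1" using nv0 by (metis norm_eq_sqrt_inner real_sqrt_eq_1_iff)
      then show ?thesis unfolding power2_norm_eq_inner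
        by (simp add: inner_add_left inner_add_right algebra_simps power2_eq_square inner_commute)
    qed
    moreover have "(S *v v0) \<bullet> w - M * (v0 \<bullet> w) = w \<bullet> w"
      unfolding w_def by (simp add: inner_diff_left inner_diff_right inner_commute algebra_simps)
    ultimately show "(2 * (w \<bullet> w)) * t + (q w - M * (norm w)^2) * t^2 \<le> 0"
      using le unfolding M_def by (simp add: algebra_simps power2_eq_square)
  qed
  then have "2 * (w \<bullet> w) = 0" by (rule quad_nonpos)
  then have "w = 0" by simp
  then have "S *v v0 = M *\<^sub>R v0" unfolding w_def by simp
  moreover have "v0 \<noteq> 0" using nv0 by auto
  ultimately show ?thesis using v0V bound unfolding q_def by blast
qed

lemma max_eig_bound:
  fixes S :: "real^'n^'n"
  assumes S: "transpose S = S"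
  shows "x \<bullet> (S *v x) \<le> max_eig S * (norm x)^2"
proof -
  have ne: "\<exists>v\<in>(UNIV::(real^'n) set). v \<noteq> 0"
    by (rule bexI[of _ "axis undefined 1"]) (auto simp: axis_eq_0_iff)
  obtain M v0 where Mv: "v0 \<noteq> 0" "S *v v0 = M *\<^sub>R v0" "\<forall>v. v \<bullet> (S *v v) \<le> M * (norm v)^2"
    using rayleigh_max[OF S subspace_UNIV _ ne] by auto
  have "M \<in> {\<mu>. \<exists>v. v \<noteq> 0 \<and> S *v v = \<mu> *\<^sub>R v}" using Mv by auto
  then have "M \<le> max_eig S" unfolding max_eig_def using eig_finite[OF S] by (rule Max_ge[rotated])
  then have "M * (norm x)^2 \<le> max_eig S * (norm x)^2" by (simp add: mult_right_mono)
  then show ?thesis using Mv(3) by (meson order_trans)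
qed

lemma sq_norm_sym:
  fixes U :: "real^'n^'n"
  assumes U: "transpose U = U"
  shows "(norm (U *v x))^2 \<le> max_eig (U ** U) * (norm x)^2"
proof -
  have "(norm (U *v x))^2 = x \<bullet> ((U ** U) *v x)"
    unfolding power2_norm_eq_inner matrix_vector_mul_assoc[symmetric]
    using sym_dot[OF U] by metis
  moreover have "transpose (U ** U) = U ** U" by (simp add: matrix_transpose_mul U)
  ultimately show ?thesis using max_eig_bound by metis
qed

lemma AAt_quad: "v \<bullet> ((A ** transpose A) *v v) = (norm (transpose A *v v))^2"
  for A :: "real^'n^'e"
  unfolding power2_norm_eq_inner matrix_vector_mul_assoc[symmetric]
  by (metis transpose_dot transpose_transpose)

lemma min_eig_bound:
  fixes A :: "real^'n^'e"
  assumes A0: "A \<noteq> 0"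
  shows "0 < min_nz_eig (A ** transpose A) \<and>
    (\<forall>\<mu>\<in>range ((*v) A). min_nz_eig (A ** transpose A) * (norm \<mu>)^2 \<le> (norm (transpose A *v \<mu>))^2)"
proof -
  define P where "P = A ** transpose A"
  have Psym: "transpose P = P" unfolding P_def by (simp add: matrix_transpose_mul)
  have nSsym: "transpose (- P) = - P"
    using Psym by (metis transpose_scalar scaleR_minus1_left)
  define V where "V = range ((*v) A)"
  have V: "subspace V" unfolding V_def
    by (intro linear_subspace_image subspace_UNIV matrix_vector_mul_linear)
  have negP: "(- Q) *v v = - (Q *v v)" for v and Q :: "real^'e^'e"
    by (simp add: matrix_vector_mult_def sum_negf vec_eq_iff)
  have Aneg: "- (A *v z) = A *v (- z)" for z
    using matrix_vector_mult_diff_distrib[of A 0 z] by simp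
  have inv: "\<forall>v\<in>V. (- P) *v v \<in> V"
  proof
    fix v assume "v \<in> V"
    then obtain y where y: "v = A *v y" unfolding V_def by auto
    have "(- P) *v v = A *v (- (transpose A *v (A *v y)))"
      unfolding y P_def negP matrix_vector_mul_assoc[symmetric] Aneg ..
    then show "(- P) *v v \<in> V" unfolding V_def by auto
  qed
  have ne: "\<exists>v\<in>V. v \<noteq> 0"
  proof (rule ccontr)
    assume "\<not> ?thesis"
    then have "\<forall>x. A *v x = 0 *v x" unfolding V_def by auto
    then have "A = 0" using matrix_eq by blast
    then show False using A0 by simp
  qed
  obtain M v0 where Mv: "v0 \<in> V" "v0 \<noteq> 0" "(- P) *v v0 = M *\<^sub>R v0"
      "\<forall>v\<in>V. v \<bullet> ((- P) *v v) \<le> M * (norm v)^2"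
    using rayleigh_max[OF nSsym V inv ne] by blast
  have Pv0: "P *v v0 = (- M) *\<^sub>R v0" using Mv(3) negP by (metis minus_equation_iff scaleR_minus_left)
  define E where "E = {\<mu>. \<mu> \<noteq> 0 \<and> (\<exists>v. v \<noteq> 0 \<and> P *v v = \<mu> *\<^sub>R v)}"
  have finE: "finite E"
    using eig_finite[OF Psym] by (rule finite_subset[rotated]) (auto simp: E_def)
  have Epos: "\<mu> > 0" if muE: "\<mu> \<in> E" for \<mu>
  proof -
    obtain v where v: "\<mu> \<noteq> 0" "v \<noteq> 0" "P *v v = \<mu> *\<^sub>R v" using muE unfolding E_def by auto
    have "\<mu> * (v \<bullet> v) = (norm (transpose A *v v))^2"
      using AAt_quad[of v A] v(3) unfolding P_def by simp
    then have "\<mu> * (v \<bullet> v) \<ge> 0" by simp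
    moreover have "v \<bullet> v > 0" using v(2) by simp
    ultimately show ?thesis using v(1) by (simp add: zero_le_mult_iff)
  qed
  obtain y0 where y0: "v0 = A *v y0" using Mv(1) unfolding V_def by auto
  have "- M \<noteq> 0"
  proof
    assume "- M = 0"
    then have "P *v v0 = 0" using Pv0 by simp
    then have "(norm (transpose A *v v0))^2 = 0" using AAt_quad[of v0 A] unfolding P_def by simp
    then have z: "transpose A *v (A *v y0) = 0" using y0 by simp
    have "(A *v y0) \<bullet> (A *v y0) = (transpose A *v (A *v y0)) \<bullet> y0"
      by (rule transpose_dot[symmetric])
    then have "(norm (A *v y0))^2 = 0"
      unfolding power2_norm_eq_inner z by (simp only: inner_zero_left)
    then show False using Mv(2) y0 by simp
  qed
  then have ME: "- M \<in> E" unfolding E_def using Mv(2) Pv0 by auto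
  have sle: "Min E \<le> - M" using finE ME by (rule Min_le)
  have spos: "Min E > 0" using Min_in[OF finE] ME Epos by blast
  have "min_nz_eig P = Min E" unfolding min_nz_eig_def E_def by simp
  moreover have "Min E * (norm \<mu>)^2 \<le> (norm (transpose A *v \<mu>))^2" if "\<mu> \<in> V" for \<mu>
  proof -
    have "\<mu> \<bullet> ((- P) *v \<mu>) \<le> M * (norm \<mu>)^2" using Mv(4) that by blast
    then have "- M * (norm \<mu>)^2 \<le> \<mu> \<bullet> (P *v \<mu>)" using negP by simp
    then have "- M * (norm \<mu>)^2 \<le> (norm (transpose A *v \<mu>))^2" using AAt_quad[of \<mu> A] unfolding P_def by simp
    moreover have "Min E * (norm \<mu>)^2 \<le> - M * (norm \<mu>)^2"
      using mult_right_mono[OF sle, of "(norm \<mu>)^2"] by simp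
    ultimately show ?thesis by linarith
  qed
  ultimately show ?thesis using spos unfolding P_def V_def by auto
qed

lemma young_norm:
  fixes a b :: "'a::real_inner"
  assumes d: "1 < (d::real)"
  shows "(norm (a + b))^2 \<le> d * (norm a)^2 + d / (d - 1) * (norm b)^2"
proof -
  define p where "p = a \<bullet> b"
  define na where "na = (norm a)^2"
  define nb where "nb = (norm b)^2"
  have e1: "(norm (a + b))^2 = na + nb + 2 * p"
    unfolding na_def nb_def p_def power2_norm_eq_inner
    by (simp add: inner_add_left inner_add_right inner_commute)
  have "0 \<le> (norm ((d - 1) *\<^sub>R a - b))^2" by simp
  also have "\<dots> = (d - 1)^2 * na - 2 * (d - 1) * p + nb"
    unfolding na_def nb_def p_def power2_norm_eq_inner
    by (simp add: inner_diff_left inner_diff_right inner_commute power2_eq_square algebra_simps)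
  finally have h: "0 \<le> (d - 1)^2 * na - 2 * (d - 1) * p + nb" .
  have dp: "d - 1 > 0" using d by simp
  have "(d - 1) * (na + nb + 2 * p) \<le> (d - 1) * (d * na + d / (d - 1) * nb)"
  proof -
    have "(d - 1) * (d * na + d / (d - 1) * nb) = (d - 1) * d * na + d * nb"
      using dp by (simp add: field_simps)
    then show ?thesis using h by (simp add: power2_eq_square algebra_simps)
  qed
  then have "na + nb + 2 * p \<le> d * na + d / (d - 1) * nb" using dp by simp
  then show ?thesis unfolding e1 na_def nb_def .
qed

lemma grad_lip:
  assumes f_d2: "\<forall>i y. (f' i has_real_derivative f'' i y) (at y)"
    and bnd: "\<forall>i y. 0 \<le> f'' i y \<and> f'' i y \<le> L"
  shows "(norm (sep_grad f' x - sep_grad f' y))^2 \<le> L^2 * (norm (x - y))^2"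
proof -
  have comp: "\<bar>f' i b - f' i a\<bar> \<le> L * \<bar>b - a\<bar>" for i a b
  proof -
    have *: "\<bar>f' i b - f' i a\<bar> \<le> L * \<bar>b - a\<bar>" if ab: "a < b" for a b
    proof -
      obtain z where "f' i b - f' i a = (b - a) * f'' i z"
        using MVT2[OF ab, of "f' i" "f'' i"] f_d2 by blast
      then show ?thesis using bnd ab by (simp add: abs_mult mult_right_mono mult.commute)
    qed
    consider "a < b" | "a = b" | "b < a" by linarith
    then show ?thesis using *[of a b] *[of b a] by cases (auto simp: abs_minus_commute)
  qed
  have L0: "0 \<le> L" using bnd by (meson order_trans)
  have sq: "(f' i (x$i) - f' i (y$i))^2 \<le> L^2 * (x$i - y$i)^2" for i
  proof -
    have "\<bar>f' i (x$i) - f' i (y$i)\<bar> \<le> L * \<bar>x$i - y$i\<bar>" using comp by blast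
    then have "\<bar>f' i (x$i) - f' i (y$i)\<bar>^2 \<le> (L * \<bar>x$i - y$i\<bar>)^2"
      by (intro power_mono) auto
    then show ?thesis by (simp add: power_mult_distrib)
  qed
  have "(norm (sep_grad f' x - sep_grad f' y))^2 = (\<Sum>i\<in>UNIV. (f' i (x$i) - f' i (y$i))^2)"
    unfolding power2_norm_eq_inner inner_vec_def sep_grad_def by (simp add: power2_eq_square)
  also have "\<dots> \<le> (\<Sum>i\<in>UNIV. L^2 * (x$i - y$i)^2)" by (intro sum_mono sq)
  also have "\<dots> = L^2 * (norm (x - y))^2"
    unfolding power2_norm_eq_inner inner_vec_def by (simp add: power2_eq_square sum_distrib_left)
  finally show ?thesis .
qed

lemma lam_range: "snd (flexpd \<alpha> \<beta> T B A f' x0 k) \<in> range ((*v) A)"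
proof (induction k)
  case 0
  then show ?case by (auto intro: range_eqI[of _ _ 0])
next
  case (Suc k)
  obtain x lam where P: "flexpd \<alpha> \<beta> T B A f' x0 k = (x, lam)" by (cases "flexpd \<alpha> \<beta> T B A f' x0 k") auto
  have sub: "subspace (range ((*v) A))"
    by (intro linear_subspace_image subspace_UNIV matrix_vector_mul_linear)
  have "lam \<in> range ((*v) A)" using Suc P by simp
  moreover have "A *v (flexpd_inner \<alpha> B A f' lam x T) \<in> range ((*v) A)" by simp
  ultimately have "lam + \<beta> *\<^sub>R (A *v (flexpd_inner \<alpha> B A f' lam x T)) \<in> range ((*v) A)"
    using sub by (simp add: subspace_add subspace_scale)
  then show ?case using P by (simp add: Let_def)
qed

lemma key_alg:
  fixes t1 Al AAx gs Cw BxT Uv UxT1 xT g1 gT :: "'a::real_vector"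
  assumes "t1 = Al + \<beta> *\<^sub>R AAx + gs" "Cw = \<beta> *\<^sub>R AAx - BxT"
    "Uv = UxT1 - (xT - \<alpha> *\<^sub>R BxT)" "xT = UxT1 - \<alpha> *\<^sub>R g1 - \<alpha> *\<^sub>R Al"
  shows "\<alpha> *\<^sub>R t1 = (Uv - \<alpha> *\<^sub>R (g1 - gT)) + (\<alpha> *\<^sub>R Cw - \<alpha> *\<^sub>R (gT - gs))"
  unfolding assms(1,2,3) assms(4) by (simp add: algebra_simps)

lemma field_aux:
  fixes c \<delta> d P Q :: real
  assumes "c \<noteq> 0" "\<delta> \<noteq> 0"
  shows "(d * P + d / \<delta> * Q) / c = d / c * P + d / (\<delta> * c) * Q"
  using assms by (simp add: field_simps)

theorem lemma3p5:
  fixes A :: "real^'n^'e" and B :: "real^'n^'n"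
    and f f' f'' :: "'n \<Rightarrow> real \<Rightarrow> real"
    and m L \<alpha> \<beta> d e g :: real and T k :: nat
    and x0 xs :: "real^'n" and ls :: "real^'e"
  assumes A: "incidence_matrix A"
    and B_sym: "transpose B = B"
    and B_psd: "\<forall>x. 0 \<le> x \<bullet> (B *v x)"
    and B_null: "{x. B *v x = 0} = {x. A *v x = 0}"
    and B_edges: "\<forall>i j. i \<noteq> j \<and> B$i$j \<noteq> 0 \<longrightarrow> (\<exists>ed. A$ed$i \<noteq> 0 \<and> A$ed$j \<noteq> 0)"
    and f_d1: "\<forall>i y. (f i has_real_derivative f' i y) (at y)"
    and f_d2: "\<forall>i y. (f' i has_real_derivative f'' i y) (at y)"
    and m_pos: "0 < m" and mL: "m \<le> L"
    and f_bounds: "\<forall>i y. m \<le> f'' i y \<and> f'' i y \<le> L"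
    and xs_feas: "A *v xs = 0"
    and xs_min: "\<forall>x. A *v x = 0 \<longrightarrow> (\<Sum>i\<in>UNIV. f i (xs$i)) \<le> (\<Sum>i\<in>UNIV. f i (x$i))"
    and ls_kkt: "sep_grad f' xs + transpose A *v ls = 0"
    and ls_range: "ls \<in> range (\<lambda>x. A *v x)"
    and \<alpha>_pos: "0 < \<alpha>" and \<beta>_pos: "0 < \<beta>" and T: "1 \<le> T"
    and \<alpha>_small: "\<alpha> < 1 / max_eig B"
    and d: "1 < d" and e: "1 < e" and g: "1 < g"
  shows
    "(let U = mat 1 - \<alpha> *\<^sub>R B;
          (xk, lk) = flexpd \<alpha> \<beta> T B A f' x0 k;
          lk1 = snd (flexpd \<alpha> \<beta> T B A f' x0 (Suc k));
          xT1 = flexpd_inner \<alpha> B A f' lk xk (T - 1);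
          xT = flexpd_inner \<alpha> B A f' lk xk T;
          s = min_nz_eig (A ** transpose A);
          C = \<beta> *\<^sub>R (transpose A ** A) - B
      in (norm (lk1 - ls))\<^sup>2
         \<le> d / (\<alpha>\<^sup>2 * s) * (e / (e - 1) * max_eig (U ** U) + e * \<alpha>\<^sup>2 * L\<^sup>2)
             * (norm (xT1 - xT))\<^sup>2
           + d / ((d - 1) * \<alpha>\<^sup>2 * s) * (g / (g - 1) * \<alpha>\<^sup>2 * max_eig (C ** C) + g * \<alpha>\<^sup>2 * L\<^sup>2)
             * (norm (xT - xs))\<^sup>2)"
proof -
  obtain xk lk where P: "flexpd \<alpha> \<beta> T B A f' x0 k = (xk, lk)"
    by (cases "flexpd \<alpha> \<beta> T B A f' x0 k") auto
  define U where "U = mat 1 - \<alpha> *\<^sub>R B"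
  define C where "C = \<beta> *\<^sub>R (transpose A ** A) - B"
  define s where "s = min_nz_eig (A ** transpose A)"
  define xT1 where "xT1 = flexpd_inner \<alpha> B A f' lk xk (T - 1)"
  define xT where "xT = flexpd_inner \<alpha> B A f' lk xk T"
  define lk1 where "lk1 = lk + \<beta> *\<^sub>R (A *v xT)"
  define g' where "g' = sep_grad f'"
  have lk1_eq: "snd (flexpd \<alpha> \<beta> T B A f' x0 (Suc k)) = lk1"
    using P by (simp add: lk1_def xT_def Let_def)
  have TS: "T = Suc (T - 1)" using T by simp
  have xT_eq: "xT = U *v xT1 - \<alpha> *\<^sub>R g' xT1 - \<alpha> *\<^sub>R (transpose A *v lk)"
    unfolding xT_def xT1_def U_def g'_def by (subst TS) (simp add: Let_def)
  have tdiff: "transpose (X - Y) = transpose X - transpose Y" for X Y :: "real^'n^'n"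
    by (simp add: transpose_def vec_eq_iff)
  have Usym: "transpose U = U" unfolding U_def tdiff transpose_scalar B_sym by simp
  have Csym: "transpose C = C" unfolding C_def tdiff transpose_scalar B_sym
    by (simp add: matrix_transpose_mul)
  have A0: "A \<noteq> 0"
  proof
    assume "A = 0"
    moreover obtain i j where "A$undefined$i = 1" using A unfolding incidence_matrix_def by blast
    ultimately show False by simp
  qed
  have lk_range: "lk \<in> range ((*v) A)" using lam_range[of \<alpha> \<beta> T B A f' x0 k] P by simp
  have sub: "subspace (range ((*v) A))"
    by (intro linear_subspace_image subspace_UNIV matrix_vector_mul_linear)
  have diff_range: "lk1 - ls \<in> range ((*v) A)"
    unfolding lk1_def using lk_range ls_range sub
    by (simp add: subspace_add subspace_scale subspace_diff)
  have s_pos: "0 < s" and s_bd: "s * (norm (lk1 - ls))^2 \<le> (norm (transpose A *v (lk1 - ls)))^2"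
    using min_eig_bound[OF A0] diff_range unfolding s_def by auto
  have Bxs: "B *v xs = 0" using B_null xs_feas by blast
  have Cxs: "C *v xs = 0"
  proof -
    have "C *v xs = \<beta> *\<^sub>R ((transpose A ** A) *v xs) - B *v xs"
      unfolding C_def matrix_vector_mult_diff_rdistrib scaleR_matrix_vector_assoc[symmetric] ..
    also have "\<dots> = \<beta> *\<^sub>R (transpose A *v (A *v xs))"
      by (simp add: Bxs matrix_vector_mul_assoc[symmetric])
    also have "\<dots> = 0" by (simp only: xs_feas matrix_vector_mult_0_right scaleR_zero_right)
    finally show ?thesis .
  qed
  define v where "v = xT1 - xT"
  define w where "w = xT - xs"
  define a where "a = U *v v - \<alpha> *\<^sub>R (g' xT1 - g' xT)"
  define b where "b = \<alpha> *\<^sub>R (C *v w) - \<alpha> *\<^sub>R (g' xT - g' xs)"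
  have key: "\<alpha> *\<^sub>R (transpose A *v (lk1 - ls)) = a + b"
  proof -
    have Uy: "U *v y = y - \<alpha> *\<^sub>R (B *v y)" for y
      unfolding U_def matrix_vector_mult_diff_rdistrib
      by (simp add: scaleR_matrix_vector_assoc[symmetric])
    have Cy: "C *v y = \<beta> *\<^sub>R (transpose A *v (A *v y)) - B *v y" for y
      unfolding C_def matrix_vector_mult_diff_rdistrib
      by (simp add: scaleR_matrix_vector_assoc[symmetric] matrix_vector_mul_assoc[symmetric])
    have ls': "transpose A *v ls = - g' xs" using ls_kkt unfolding g'_def
      by (simp add: eq_neg_iff_add_eq_0 add.commute)
    have "transpose A *v (lk1 - ls) = transpose A *v lk + \<beta> *\<^sub>R (transpose A *v (A *v xT)) + g' xs"
      unfolding lk1_def using ls'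
      by (simp only: matrix_vector_mult_diff_distrib matrix_vector_right_distrib
          matrix_vector_mult_scaleR) simp
    moreover have "C *v w = \<beta> *\<^sub>R (transpose A *v (A *v xT)) - B *v xT"
      unfolding w_def matrix_vector_mult_diff_distrib Cxs by (simp only: Cy diff_zero)
    moreover have "U *v v = U *v xT1 - (xT - \<alpha> *\<^sub>R (B *v xT))"
      unfolding v_def matrix_vector_mult_diff_distrib Uy ..
    ultimately show ?thesis unfolding a_def b_def
      using xT_eq by (rule key_alg)
  qed
  have ab: "\<alpha>^2 * s * (norm (lk1 - ls))^2 \<le> d * (norm a)^2 + d / (d - 1) * (norm b)^2"
  proof -
    have "\<alpha>^2 * s * (norm (lk1 - ls))^2 \<le> \<alpha>^2 * (norm (transpose A *v (lk1 - ls)))^2"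
      using s_bd by (simp add: mult.assoc mult_left_mono)
    also have "\<dots> = (norm (a + b))^2" unfolding key[symmetric] using \<alpha>_pos
      by (simp add: power_mult_distrib)
    also have "\<dots> \<le> d * (norm a)^2 + d / (d - 1) * (norm b)^2" by (rule young_norm[OF d])
    finally show ?thesis .
  qed
  have bnd: "\<forall>i y. 0 \<le> f'' i y \<and> f'' i y \<le> L" using f_bounds m_pos by (meson less_le order_trans)
  have na: "(norm a)^2 \<le> (e / (e - 1) * max_eig (U ** U) + e * \<alpha>^2 * L^2) * (norm v)^2"
  proof -
    have "a = (- (\<alpha> *\<^sub>R (g' xT1 - g' xT))) + U *v v" unfolding a_def by simp
    then have "(norm a)^2 \<le> e * (norm (\<alpha> *\<^sub>R (g' xT1 - g' xT)))^2 + e / (e - 1) * (norm (U *v v))^2"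
      using young_norm[OF e, of "- (\<alpha> *\<^sub>R (g' xT1 - g' xT))" "U *v v"] by simp
    moreover have "(norm (\<alpha> *\<^sub>R (g' xT1 - g' xT)))^2 \<le> \<alpha>^2 * (L^2 * (norm v)^2)"
      using grad_lip[OF f_d2 bnd, of xT1 xT] \<alpha>_pos unfolding g'_def v_def
      by (simp add: power_mult_distrib)
    moreover have "(norm (U *v v))^2 \<le> max_eig (U ** U) * (norm v)^2" by (rule sq_norm_sym[OF Usym])
    moreover have "0 < e / (e - 1)" using e by simp
    ultimately have "(norm a)^2 \<le> e * (\<alpha>^2 * (L^2 * (norm v)^2)) + e / (e - 1) * (max_eig (U ** U) * (norm v)^2)"
      using e by (smt (verit) mult_left_mono)
    then show ?thesis by (simp add: algebra_simps)
  qed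
  have nb: "(norm b)^2 \<le> (g / (g - 1) * \<alpha>^2 * max_eig (C ** C) + g * \<alpha>^2 * L^2) * (norm w)^2"
  proof -
    have "b = (- (\<alpha> *\<^sub>R (g' xT - g' xs))) + \<alpha> *\<^sub>R (C *v w)" unfolding b_def by simp
    then have "(norm b)^2 \<le> g * (norm (\<alpha> *\<^sub>R (g' xT - g' xs)))^2 + g / (g - 1) * (norm (\<alpha> *\<^sub>R (C *v w)))^2"
      using young_norm[OF g, of "- (\<alpha> *\<^sub>R (g' xT - g' xs))" "\<alpha> *\<^sub>R (C *v w)"] by simp
    moreover have "(norm (\<alpha> *\<^sub>R (g' xT - g' xs)))^2 \<le> \<alpha>^2 * (L^2 * (norm w)^2)"
      using grad_lip[OF f_d2 bnd, of xT xs] \<alpha>_pos unfolding g'_def w_def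
      by (simp add: power_mult_distrib)
    moreover have "(norm (\<alpha> *\<^sub>R (C *v w)))^2 \<le> \<alpha>^2 * (max_eig (C ** C) * (norm w)^2)"
      using sq_norm_sym[OF Csym, of w] \<alpha>_pos by (simp add: power_mult_distrib)
    moreover have "0 < g / (g - 1)" using g by simp
    ultimately have "(norm b)^2 \<le> g * (\<alpha>^2 * (L^2 * (norm w)^2)) + g / (g - 1) * (\<alpha>^2 * (max_eig (C ** C) * (norm w)^2))"
      using g by (smt (verit) mult_left_mono)
    then show ?thesis by (simp add: algebra_simps)
  qed
  define Ka where "Ka = e / (e - 1) * max_eig (U ** U) + e * \<alpha>^2 * L^2"
  define Kb where "Kb = g / (g - 1) * \<alpha>^2 * max_eig (C ** C) + g * \<alpha>^2 * L^2"
  have "\<alpha>^2 * s * (norm (lk1 - ls))^2 \<le> d * (Ka * (norm v)^2) + d / (d - 1) * (Kb * (norm w)^2)"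
  proof -
    have "d * (norm a)^2 \<le> d * (Ka * (norm v)^2)" using na d unfolding Ka_def by simp
    moreover have "d / (d - 1) * (norm b)^2 \<le> d / (d - 1) * (Kb * (norm w)^2)"
      using nb d unfolding Kb_def by (intro mult_left_mono) auto
    ultimately show ?thesis using ab by linarith
  qed
  moreover have as: "\<alpha>^2 * s > 0" using \<alpha>_pos s_pos by simp
  ultimately have main: "(norm (lk1 - ls))^2 \<le> (d * (Ka * (norm v)^2) + d / (d - 1) * (Kb * (norm w)^2)) / (\<alpha>^2 * s)"
    by (simp add: le_divide_eq mult.commute)
  have "(d * (Ka * (norm v)^2) + d / (d - 1) * (Kb * (norm w)^2)) / (\<alpha>^2 * s)
     = d / (\<alpha>^2 * s) * Ka * (norm v)^2 + d / ((d - 1) * \<alpha>^2 * s) * Kb * (norm w)^2"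
  proof -
    have c0: "\<alpha>^2 * s \<noteq> 0" using as by (metis order_less_irrefl)
    have d0: "d - 1 \<noteq> 0" using d by simp
    show ?thesis using field_aux[OF c0 d0, of d "Ka * (norm v)^2" "Kb * (norm w)^2"]
      by (simp only: mult.assoc)
  qed
  with main have final: "(norm (lk1 - ls))^2 \<le> d / (\<alpha>^2 * s) * Ka * (norm v)^2 + d / ((d - 1) * \<alpha>^2 * s) * Kb * (norm w)^2"
    by simp
  show ?thesis
    unfolding Let_def P prod.case lk1_eq
    using final unfolding Ka_def Kb_def v_def w_def U_def C_def s_def xT_def xT1_def .
qed

end
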